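(* For every integer $r\geq 2$, $$\sum_{M\geq1}g_r(M)z^M=\frac{z}{1-2z}\cdot\frac{(1-z)^{r-1}-z^{r-1}}{(1-z)^{r-1}-z^r}.$$
   Context: The perimeter of a nonempty partition $\lambda$ with largest part $\lambda_1$ and $\ell(\lambda)$ parts is $\lambda_1+\ell(\lambda)-1$. For $r\geq2$, $g_r(M)$ is the number of partitions with perimeter $M$ none of whose parts is divisible by $r$. *)

theory Defs
  imports "HOL-Computational_Algebra.Formal_Power_Series"
begin

definition is_partition :: "nat list \<Rightarrow> bool" where
  "is_partition xs \<longleftrightarrow> xs \<noteq> [] \<and> sorted_wrt (\<ge>) xs \<and> (\<forall>x\<in>set xs. 0 < x)"

definition perimeter :: "nat list \<Rightarrow> nat" where
  "perimeter xs = Max (set xs) + length xs - 1"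

definition g :: "nat \<Rightarrow> nat \<Rightarrow> nat" where
  "g r M = card {xs. is_partition xs \<and> (\<forall>x\<in>set xs. \<not> r dvd x) \<and> perimeter xs = M}"

end

theory Submission
  imports Defs "HOL-Library.Multiset"
begin


definition L :: "nat set \<Rightarrow> nat \<Rightarrow> nat list set" where
  "L A n = {ys. length ys = n \<and> set ys \<subseteq> A \<and> sorted_wrt (\<ge>) ys}"

lemma card_L:
  assumes "finite A"
  shows "card (L A n) = (card A + n - 1) choose n"
proof -
  have "bij_betw mset (L A n) (multisets_of_size A n)"
  proof (rule bij_betw_imageI)
    show "inj_on mset (L A n)"
    proof (rule inj_onI)
      fix xs ys assume xs: "xs \<in> L A n" and ys: "ys \<in> L A n" and e: "mset xs = mset ys"
      have sx: "sorted (rev xs)" and sy: "sorted (rev ys)"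
        using xs ys by (auto simp: L_def sorted_wrt_rev)
      have "sort (rev xs) = rev ys" by (rule properties_for_sort) (use e sy in auto)
      moreover have "sort (rev xs) = rev xs" using sx by (simp add: sorted_sort_id)
      ultimately show "xs = ys" by simp
    qed
    show "mset ` L A n = multisets_of_size A n"
    proof
      show "mset ` L A n \<subseteq> multisets_of_size A n"
        by (auto simp: L_def multisets_of_size_def)
      show "multisets_of_size A n \<subseteq> mset ` L A n"
      proof
        fix N assume N: "N \<in> multisets_of_size A n"
        let ?xs = "rev (sorted_list_of_multiset N)"
        have "?xs \<in> L A n" using N
          by (auto simp: L_def multisets_of_size_def sorted_wrt_rev

              simp flip: size_mset) 
        moreover have "mset ?xs = N" by simp
        ultimately show "N \<in> mset ` L A n" by (metis image_eqI)
      qed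
    qed
  qed
  then have "card (L A n) = card (multisets_of_size A n)" by (rule bij_betw_same_card)
  also have "\<dots> = (card A + n - 1) choose n" by (rule card_multisets_of_size[OF assms])
  finally show ?thesis .
qed

definition Aset :: "nat \<Rightarrow> nat \<Rightarrow> nat set" where
  "Aset r a = {x\<in>{1..a}. \<not> r dvd x}"

lemma finite_L: "finite A \<Longrightarrow> finite (L A n)"
proof -
  assume f: "finite A"
  have "L A n \<subseteq> {xs. set xs \<subseteq> A \<and> length xs = n}" by (auto simp: L_def)
  moreover have "finite {xs. set xs \<subseteq> A \<and> length xs = n}" by (rule finite_lists_length_eq[OF f])
  ultimately show ?thesis by (rule finite_subset)
qed

lemma part_set_eq:
  "{xs. is_partition xs \<and> (\<forall>x\<in>set xs. \<not> r dvd x) \<and> perimeter xs = M}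
   = (\<Union>a\<in>{a\<in>{1..M}. \<not> r dvd a}. (#) a ` L (Aset r a) (M - a))"
proof (intro equalityI subsetI)
  fix xs assume "xs \<in> {xs. is_partition xs \<and> (\<forall>x\<in>set xs. \<not> r dvd x) \<and> perimeter xs = M}"
  then have p: "is_partition xs" and nd: "\<forall>x\<in>set xs. \<not> r dvd x" and pm: "perimeter xs = M" by auto
  from p obtain a ys where xs: "xs = a # ys" unfolding is_partition_def by (cases xs) auto
  have s: "\<forall>y\<in>set ys. y \<le> a" "sorted_wrt (\<ge>) ys" "a > 0" "\<forall>y\<in>set ys. y > 0"
    using p unfolding is_partition_def xs by auto
  have mx: "Max (set xs) = a" using s(1) unfolding xs by (auto intro: Max_eqI)
  have M: "M = a + length ys" using pm mx unfolding perimeter_def xs by simp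
  have "ys \<in> L (Aset r a) (M - a)" using s nd M unfolding L_def Aset_def xs by auto
  moreover have "a \<in> {a\<in>{1..M}. \<not> r dvd a}" using s nd M xs by auto
  ultimately show "xs \<in> (\<Union>a\<in>{a\<in>{1..M}. \<not> r dvd a}. (#) a ` L (Aset r a) (M - a))"
    unfolding xs by blast
next
  fix xs assume "xs \<in> (\<Union>a\<in>{a\<in>{1..M}. \<not> r dvd a}. (#) a ` L (Aset r a) (M - a))"
  then obtain a ys where a: "a \<in> {1..M}" "\<not> r dvd a" and ys: "ys \<in> L (Aset r a) (M - a)"
    and xs: "xs = a # ys" by blast
  have s: "\<forall>y\<in>set ys. y \<le> a \<and> y > 0 \<and> \<not> r dvd y" "sorted_wrt (\<ge>) ys" "length ys = M - a"
    using ys unfolding L_def Aset_def by auto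
  have mx: "Max (set xs) = a" using s(1) unfolding xs by (auto intro: Max_eqI)
  show "xs \<in> {xs. is_partition xs \<and> (\<forall>x\<in>set xs. \<not> r dvd x) \<and> perimeter xs = M}"
    using s a mx unfolding is_partition_def perimeter_def xs by auto
qed

lemma g_sum: "g r M = (\<Sum>a\<in>{a\<in>{1..M}. \<not> r dvd a}. (card (Aset r a) + (M - a) - 1) choose (M - a))"
proof -
  have fin: "finite (Aset r a)" for a by (simp add: Aset_def)
  have "g r M = card (\<Union>a\<in>{a\<in>{1..M}. \<not> r dvd a}. (#) a ` L (Aset r a) (M - a))"
    unfolding g_def part_set_eq ..
  also have "\<dots> = (\<Sum>a\<in>{a\<in>{1..M}. \<not> r dvd a}. card ((#) a ` L (Aset r a) (M - a)))"
    by (rule card_UN_disjoint) (auto intro: finite_L fin)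
  also have "\<dots> = (\<Sum>a\<in>{a\<in>{1..M}. \<not> r dvd a}. card (L (Aset r a) (M - a)))"
    by (rule sum.cong) (auto intro!: card_image inj_onI)
  also have "\<dots> = (\<Sum>a\<in>{a\<in>{1..M}. \<not> r dvd a}. (card (Aset r a) + (M - a) - 1) choose (M - a))"
    by (rule sum.cong) (auto simp: card_L fin)
  finally show ?thesis .
qed


definition V :: "rat fps" where "V = inverse (1 - fps_X)"

lemma V_eq: "V = Abs_fps (\<lambda>n. 1)"
proof -
  have "V = inverse (inverse (Abs_fps (\<lambda>n. 1::rat)))" unfolding V_def fps_inverse_gp' ..
  also have "\<dots> = Abs_fps (\<lambda>n. 1)" by (rule fps_inverse_idempotent) simp
  finally show ?thesis .
qed

lemma V_inv: "V * (1 - fps_X) = 1"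
  unfolding V_def by (rule inverse_mult_eq_1) simp

lemma Vpow_Suc: "fps_nth (V ^ Suc k) n = of_nat ((k + n) choose n)"
proof (induction k arbitrary: n)
  case 0 then show ?case by (simp add: V_eq)
next
  case (Suc k)
  have "fps_nth (V ^ Suc (Suc k)) n = fps_nth (V ^ Suc k * V) n" by (simp only: power_Suc2)
  also have "\<dots> = (\<Sum>i=0..n. fps_nth (V ^ Suc k) i)" by (simp add: fps_mult_nth V_eq)
  also have "\<dots> = (\<Sum>i\<le>n. of_nat ((k + i) choose i))" by (simp only: Suc.IH atLeast0AtMost)
  also have "\<dots> = of_nat (\<Sum>i\<le>n. (k + i) choose i)" by simp
  also have "\<dots> = of_nat ((Suc k + n) choose n)" by (subst sum_choose_lower) simp
  finally show ?case .
qed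

lemma Vpow: "fps_nth (V ^ k) n = of_nat ((k + n - 1) choose n)"
proof (cases k)
  case 0 then show ?thesis by (cases n) auto
next
  case (Suc k') then show ?thesis unfolding Suc Vpow_Suc by simp
qed

lemma Aset_Suc: "card (Aset r (Suc a)) = card (Aset r a) + (if r dvd Suc a then 0 else 1)"
proof -
  have "Aset r (Suc a) = (if r dvd Suc a then Aset r a else insert (Suc a) (Aset r a))"
    by (auto simp: Aset_def le_Suc_eq)
  then show ?thesis by (simp add: Aset_def)
qed

lemma Aset_card: "r \<ge> 2 \<Longrightarrow> card (Aset r n) = (n div r) * (r - 1) + n mod r"
proof (induction n)
  case 0 then show ?case by (simp add: Aset_def)
next
  case (Suc n)
  have "r > 0" using Suc.prems by simp
  have mr: "n mod r < r" using \<open>r > 0\<close> by simp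
  show ?case
  proof (cases "r dvd Suc n")
    case True
    then have "Suc n mod r = 0" by simp
    then have "Suc (n mod r) = r" by (metis mod_Suc mr Suc_lessI nat.distinct(1))
    have d: "Suc n div r = Suc (n div r)" "Suc n mod r = 0" using True by (simp_all add: div_Suc)
    have e: "n = r * (n div r) + (r - 1)" using \<open>Suc (n mod r) = r\<close>
      by (metis diff_Suc_1 div_mult_mod_eq mult.commute)
    have "card (Aset r (Suc n)) = card (Aset r n)" using True by (simp add: Aset_Suc)
    also have "\<dots> = (n div r) * (r - 1) + (r - 1)" using Suc \<open>Suc (n mod r) = r\<close> by simp
    also have "\<dots> = (Suc n div r) * (r - 1) + Suc n mod r" using d by simp
    finally show ?thesis .
  next
    case False
    then have nz: "Suc n mod r \<noteq> 0" by (metis dvd_eq_mod_eq_0)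
    then have "Suc (n mod r) \<noteq> r" by (metis mod_Suc)
    then have d: "Suc n div r = n div r" "Suc n mod r = Suc (n mod r)"
      using nz by (simp_all add: div_Suc mod_Suc)
    have "card (Aset r (Suc n)) = card (Aset r n) + 1" using False by (simp add: Aset_Suc)
    also have "\<dots> = (Suc n div r) * (r - 1) + Suc n mod r" using Suc d by simp
    finally show ?thesis .
  qed
qed



lemma alg:
  fixes x v F :: "'a::comm_ring_1"
  assumes vx: "v * (1 - x) = 1" and n: "n \<ge> 1"
    and FS: "F * (1 - x ^ Suc n * v ^ n) = (\<Sum>i=1..n. (x * v) ^ i)"
  shows "F * ((1 - 2 * x) * ((1 - x) ^ n - x ^ Suc n)) = x * ((1 - x) ^ n - x ^ n)"
proof -
  let ?S = "\<Sum>i=1..n. (x * v) ^ i"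
  have e1: "(1 - x ^ Suc n * v ^ n) * (1 - x) ^ n = (1 - x) ^ n - x ^ Suc n"
  proof -
    have "(1 - x ^ Suc n * v ^ n) * (1 - x) ^ n = (1 - x) ^ n - x ^ Suc n * (v ^ n * (1 - x) ^ n)"
      by (simp add: left_diff_distrib mult.assoc)
    also have "v ^ n * (1 - x) ^ n = (v * (1 - x)) ^ n" by (simp add: power_mult_distrib)
    finally have "(1 - x ^ Suc n * v ^ n) * (1 - x) ^ n = (1 - x) ^ n - x ^ Suc n * (v * (1 - x)) ^ n" .
    then show ?thesis using vx by simp
  qed
  have e2: "(1 - x * v) * ?S = x * v - (x * v) ^ Suc n"
    using sum_gp_multiplied[of 1 n "x * v"] n by simp
  have e3: "(1 - x) * (1 - x * v) = 1 - 2 * x"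
  proof -
    have "(1 - x) * (1 - x * v) = 1 - x - x * (v * (1 - x))" by (simp add: algebra_simps)
    also have "\<dots> = 1 - x - x * 1" by (simp only: vx)
    finally show ?thesis by simp
  qed
  have e4: "(x * v) ^ k * (1 - x) ^ k = x ^ k" for k
  proof -
    have "(x * v) ^ k * (1 - x) ^ k = x ^ k * (v * (1 - x)) ^ k" by (simp only: power_mult_distrib mult_ac)
    then show ?thesis using vx by simp
  qed
  have e5: "(x * v) * (1 - x) ^ Suc n = x * (1 - x) ^ n"
  proof -
    have "(x * v) * (1 - x) ^ Suc n = x * (1 - x) ^ n * (v * (1 - x))" by (simp add: mult_ac)
    then show ?thesis using vx by simp
  qed
  have "F * ((1 - 2 * x) * ((1 - x) ^ n - x ^ Suc n))
      = F * ((1 - 2 * x) * ((1 - x ^ Suc n * v ^ n) * (1 - x) ^ n))" by (simp only: e1)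
  also have "\<dots> = (1 - 2 * x) * ((F * (1 - x ^ Suc n * v ^ n)) * (1 - x) ^ n)" by (simp only: mult_ac)
  also have "\<dots> = (1 - 2 * x) * (?S * (1 - x) ^ n)" by (simp only: FS)
  also have "\<dots> = (1 - 2 * x) * ?S * (1 - x) ^ n" by (simp only: mult.assoc)
  also have "\<dots> = ((1 - x) * (1 - x * v)) * ?S * (1 - x) ^ n" by (simp only: e3)
  also have "\<dots> = (1 - x) * ((1 - x * v) * ?S) * (1 - x) ^ n" by (simp only: mult.assoc)
  also have "\<dots> = (1 - x) * (x * v - (x * v) ^ Suc n) * (1 - x) ^ n" by (simp only: e2)
  also have "\<dots> = (x * v) * (1 - x) ^ Suc n - (x * v) ^ Suc n * (1 - x) ^ Suc n"
    by (simp add: algebra_simps)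
  also have "\<dots> = x * (1 - x) ^ n - x ^ Suc n" by (simp only: e4 e5)
  also have "\<dots> = x * ((1 - x) ^ n - x ^ n)" by (simp add: algebra_simps)
  finally show ?thesis .
qed



definition T :: "nat \<Rightarrow> nat \<Rightarrow> rat fps" where
  "T r a = fps_X ^ a * V ^ card (Aset r a)"

definition Fin :: "nat \<Rightarrow> nat \<Rightarrow> rat fps" where
  "Fin r N = (\<Sum>a\<in>{1..N}. if r dvd a then 0 else T r a)"

definition Fg :: "nat \<Rightarrow> rat fps" where
  "Fg r = Abs_fps (\<lambda>M. if M = 0 then 0 else of_nat (g r M))"

lemma T_nth: "fps_nth (T r a) j = (if j < a then 0 else of_nat ((card (Aset r a) + (j - a) - 1) choose (j - a)))"
  unfolding T_def by (simp add: fps_X_power_mult_nth Vpow)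

lemma Fin_nth:
  assumes "j \<le> N"
  shows "fps_nth (Fin r N) j = fps_nth (Fg r) j"
proof -
  let ?S = "{a\<in>{1..j}. \<not> r dvd a}"
  let ?c = "\<lambda>a. (of_nat ((card (Aset r a) + (j - a) - 1) choose (j - a)) :: rat)"
  have "fps_nth (Fin r N) j = (\<Sum>a\<in>{1..N}. if r dvd a then 0 else fps_nth (T r a) j)"
    unfolding Fin_def fps_sum_nth by (rule sum.cong) auto
  also have "\<dots> = (\<Sum>a\<in>{1..N}. if a \<in> ?S then ?c a else 0)"
    by (rule sum.cong) (auto simp: T_nth)
  also have "\<dots> = sum ?c ({1..N} \<inter> ?S)" by (rule sum.inter_restrict[symmetric]) simp
  also have "{1..N} \<inter> ?S = ?S" using assms by auto
  also have "sum ?c ?S = of_nat (g r j)" by (simp add: g_sum)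
  also have "\<dots> = fps_nth (Fg r) j" by (simp add: Fg_def g_sum)
  finally show ?thesis .
qed

definition uu :: "nat \<Rightarrow> rat fps" where "uu r = fps_X ^ r * V ^ (r - 1)"
definition ww :: "rat fps" where "ww = fps_X * V"

lemma pow_split:
  "(fps_X::rat fps) ^ (q * r + m) * V ^ (q * (r - 1) + m) = (fps_X ^ r * V ^ (r - 1)) ^ q * (fps_X * V) ^ m"
  by (simp add: power_add power_mult_distrib mult_ac flip: power_mult)

lemma T_eq:
  assumes r: "r \<ge> 2"
  shows "T r a = uu r ^ (a div r) * ww ^ (a mod r)"
proof -
  have a: "a = (a div r) * r + a mod r" by simp
  have "T r a = fps_X ^ ((a div r) * r + a mod r) * V ^ ((a div r) * (r - 1) + a mod r)"
    unfolding T_def Aset_card[OF r] using a by metis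
  also have "\<dots> = (fps_X ^ r * V ^ (r - 1)) ^ (a div r) * (fps_X * V) ^ (a mod r)"
    by (rule pow_split)
  finally show ?thesis unfolding uu_def ww_def .
qed

lemma Fin_closed:
  assumes r: "r \<ge> 2"
  shows "Fin r N = (\<Sum>q<N div r. uu r ^ q) * (\<Sum>i=1..r-1. ww ^ i)
                 + uu r ^ (N div r) * (\<Sum>i=1..N mod r. ww ^ i)"
proof (induction N)
  case 0 then show ?case by (simp add: Fin_def)
next
  case (Suc N)
  have r0: "r > 0" using r by simp
  have FS: "Fin r (Suc N) = Fin r N + (if r dvd Suc N then 0 else T r (Suc N))"
    unfolding Fin_def by simp
  show ?case
  proof (cases "r dvd Suc N")
    case True
    then have "Suc N mod r = 0" by simp
    then have m: "Suc (N mod r) = r" by (metis mod_Suc r0 mod_less_divisor Suc_lessI nat.distinct(1))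
    then have d: "Suc N div r = Suc (N div r)" "Suc N mod r = 0" "N mod r = r - 1"
      using True by (simp_all add: div_Suc)
    show ?thesis using FS True Suc d by (simp add: distrib_right)
  next
    case False
    then have nz: "Suc N mod r \<noteq> 0" by (metis dvd_eq_mod_eq_0)
    then have "Suc (N mod r) \<noteq> r" by (metis mod_Suc)
    then have d: "Suc N div r = N div r" "Suc N mod r = Suc (N mod r)"
      using nz by (simp_all add: div_Suc mod_Suc)
    show ?thesis using FS False Suc d by (simp add: T_eq[OF r] algebra_simps)
  qed
qed

lemma Fg_rel:
  assumes r: "r \<ge> 2"
  shows "Fg r * (1 - uu r) = (\<Sum>i=1..r-1. ww ^ i)"
proof (rule fps_ext)
  fix M
  let ?S = "\<Sum>i=1..r-1. ww ^ i"
  define Q where "Q = Suc M"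
  have r0: "r > 0" using r by simp
  have "Suc M * 1 \<le> Suc M * r" using r by (intro mult_le_mono2) simp
  then have MQ: "M < Q * r" unfolding Q_def by simp
  have FQ: "Fin r (Q * r) = (\<Sum>q<Q. uu r ^ q) * ?S"
    using Fin_closed[OF r, of "Q * r"] r0 by simp
  have "fps_nth (Fg r * (1 - uu r)) M = (\<Sum>i=0..M. fps_nth (Fg r) i * fps_nth (1 - uu r) (M - i))"
    by (rule fps_mult_nth)
  also have "\<dots> = (\<Sum>i=0..M. fps_nth (Fin r (Q * r)) i * fps_nth (1 - uu r) (M - i))"
    using MQ by (intro sum.cong refl) (simp add: Fin_nth)
  also have "\<dots> = fps_nth (Fin r (Q * r) * (1 - uu r)) M" by (rule fps_mult_nth[symmetric])
  also have "Fin r (Q * r) * (1 - uu r) = (1 - uu r ^ Q) * ?S"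
    unfolding FQ one_diff_power_eq by (simp add: mult_ac)
  also have "fps_nth ((1 - uu r ^ Q) * ?S) M = fps_nth ?S M - fps_nth (uu r ^ Q * ?S) M"
    by (simp add: algebra_simps)
  also have "uu r ^ Q * ?S = fps_X ^ (r * Q) * (V ^ ((r - 1) * Q) * ?S)"
    unfolding uu_def by (simp add: power_mult_distrib mult_ac flip: power_mult)
  also have "fps_nth \<dots> M = 0" using MQ by (simp add: fps_X_power_mult_nth mult.commute)
  finally show "fps_nth (Fg r * (1 - uu r)) M = fps_nth ?S M" by simp
qed



theorem mainTheorem13:
  fixes r :: nat
  assumes "r \<ge> 2"
  shows "(Abs_fps (\<lambda>M. if M = 0 then 0 else of_nat (g r M)) :: rat fps) =
    (fps_X / (1 - 2 * fps_X)) *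
    (((1 - fps_X) ^ (r - 1) - fps_X ^ (r - 1)) / ((1 - fps_X) ^ (r - 1) - fps_X ^ r))"
proof -
  define n where "n = r - 1"
  have rn: "r = Suc n" and n1: "n \<ge> 1" using assms unfolding n_def by auto
  let ?A = "1 - 2 * fps_X :: rat fps"
  let ?E = "(1 - fps_X) ^ n - fps_X ^ Suc n :: rat fps"
  let ?N = "(1 - fps_X) ^ n - fps_X ^ n :: rat fps"
  have A0: "fps_nth ?A 0 \<noteq> 0" by simp
  have E0: "fps_nth ?E 0 \<noteq> 0" by simp
  have AE0: "fps_nth (?A * ?E) 0 \<noteq> 0" using A0 E0 by simp
  have rel: "Fg r * (1 - fps_X ^ Suc n * V ^ n) = (\<Sum>i=1..n. (fps_X * V) ^ i)"
    using Fg_rel[OF assms] unfolding uu_def ww_def rn by simp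
  have key: "Fg r * (?A * ?E) = fps_X * ?N"
    by (rule alg[OF V_inv n1 rel])
  have "Fg r = Fg r * ((?A * ?E) * inverse (?A * ?E))"
    using inverse_mult_eq_1'[OF AE0] by simp
  also have "\<dots> = fps_X * ?N * inverse (?A * ?E)" by (subst key[symmetric]) (simp only: mult.assoc)
  also have "\<dots> = (fps_X * inverse ?A) * (?N * inverse ?E)" by (simp add: fps_inverse_mult mult_ac)
  also have "\<dots> = (fps_X / ?A) * (?N / ?E)" using A0 E0 by (simp add: fps_divide_unit)
  finally show ?thesis unfolding Fg_def n_def using assms by simp
qed

end
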